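(* Let $\gamma\ge1$ be an integer, $C\subset\{0,1,\dots,p^\gamma-1\}$ nonempty, and $\Omega=\bigsqcup_{c\in C}(c+p^\gamma\mathbb{Z}_p)$. If $\Lambda\subset\mathbb{Q}_p$ is a spectrum of $\Omega$, then $\sharp(B(a,p^\gamma)\cap\Lambda)=\sharp C$ for every $a\in\mathbb{Q}_p$.
   Context: $p\ge2$ is a prime. $\mathfrak{m}$ is the Haar measure on $\mathbb{Q}_p$ with $\mathfrak{m}(\mathbb{Z}_p)=1$. $B(a,p^\gamma)=a+p^{-\gamma}\mathbb{Z}_p$. Characters: $\chi(x)=e^{2\pi i\{x\}}$, where $\{x\}$ is the $p$-adic fractional part of $x$, and $\chi_y(x)=\chi(yx)$. Spectrum: $\Lambda$ is a spectrum of $\Omega$ if $\{\chi_\lambda|_\Omega\}_{\lambda\in\Lambda}$ is an orthonormal basis of $L^2(\mathfrak{m}|_\Omega/\mathfrak{m}(\Omega))$. *)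

theory Defs
  imports "HOL-Probability.Probability"
begin

text \<open>An element x of Q_p is represented by the family of its
residues x mod p^n Z_p (n an integer), each residue given by its canonical representative,
a rational number of the form a / p^k lying in [0, p^n). In particular x 0 is the p-adic
fractional part of x.\<close>

definition rmod :: "rat \<Rightarrow> rat \<Rightarrow> rat" where
  "rmod a m = a - m * of_int \<lfloor>a / m\<rfloor>"

definition Zinvp :: "nat \<Rightarrow> rat set" where
  "Zinvp p = {q. \<exists>(a::int) (k::nat). q = of_int a / of_nat p ^ k}"

definition Qp :: "nat \<Rightarrow> (int \<Rightarrow> rat) set" where
  "Qp p = {x. (\<forall>n. x n \<in> Zinvp p \<and> 0 \<le> x n \<and> x n < of_nat p powi n)
              \<and> (\<forall>n. x n = rmod (x (n + 1)) (of_nat p powi n))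
              \<and> (\<exists>N. \<forall>n\<le>N. x n = 0)}"

definition padic_of_int :: "nat \<Rightarrow> int \<Rightarrow> (int \<Rightarrow> rat)" where
  "padic_of_int p c = (\<lambda>n. rmod (of_int c) (of_nat p powi n))"

text \<open>Multiplication: (x y) mod p^n Z_p is the eventual value of x_m y_m mod p^n, m large.\<close>
definition padic_mult :: "nat \<Rightarrow> (int \<Rightarrow> rat) \<Rightarrow> (int \<Rightarrow> rat) \<Rightarrow> (int \<Rightarrow> rat)" where
  "padic_mult p x y = (\<lambda>n. THE q. \<exists>M. \<forall>m\<ge>M. rmod (x m * y m) (of_nat p powi n) = q)"

definition padic_frac :: "(int \<Rightarrow> rat) \<Rightarrow> rat" where
  "padic_frac x = x 0"

definition padic_chi :: "nat \<Rightarrow> (int \<Rightarrow> rat) \<Rightarrow> (int \<Rightarrow> rat) \<Rightarrow> complex" where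
  "padic_chi p y x = cis (2 * pi * real_of_rat (padic_frac (padic_mult p y x)))"

text \<open>B(a, p^k) = a + p^(-k) Z_p = {x. x - a \<in> p^(-k) Z_p}, i.e. x and a have the same residue
modulo p^(-k) Z_p.\<close>
definition padic_ball :: "nat \<Rightarrow> (int \<Rightarrow> rat) \<Rightarrow> int \<Rightarrow> (int \<Rightarrow> rat) set" where
  "padic_ball p a k = {x \<in> Qp p. x (- k) = a (- k)}"

text \<open>Haar measure on Z_p (normalised m(Z_p) = 1), constructed as the image of the product of
uniform measures on the digits {0..p-1} under x = sum_k d_k p^k.  Since every set considered
below lies in Z_p, this is the restriction of the Haar measure of Q_p to Z_p.\<close>
definition digits_to_Qp :: "nat \<Rightarrow> (nat \<Rightarrow> nat) \<Rightarrow> (int \<Rightarrow> rat)" where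
  "digits_to_Qp p d = (\<lambda>n. if n \<le> 0 then 0 else of_nat (\<Sum>k<nat n. d k * p ^ k))"

definition haar_Zp :: "nat \<Rightarrow> (int \<Rightarrow> rat) measure" where
  "haar_Zp p = distr (PiM (UNIV :: nat set) (\<lambda>_. uniform_count_measure {0..<p}))
                     (PiM (UNIV :: int set) (\<lambda>_. count_space UNIV)) (digits_to_Qp p)"

definition padic_inner :: "nat \<Rightarrow> (int \<Rightarrow> rat) set \<Rightarrow> ((int \<Rightarrow> rat) \<Rightarrow> complex)
    \<Rightarrow> ((int \<Rightarrow> rat) \<Rightarrow> complex) \<Rightarrow> complex" where
  "padic_inner p \<Omega> f g =
     (LINT x | restrict_space (haar_Zp p) \<Omega>. f x * cnj (g x)) / complex_of_real (measure (haar_Zp p) \<Omega>)"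

text \<open>Lambda is a spectrum of Omega: {chi_lambda|_Omega} is an orthonormal basis of
L^2(m|_Omega / m(Omega)), i.e. an orthonormal family whose orthogonal complement is trivial.\<close>
definition is_spectrum :: "nat \<Rightarrow> (int \<Rightarrow> rat) set \<Rightarrow> (int \<Rightarrow> rat) set \<Rightarrow> bool" where
  "is_spectrum p \<Omega> \<Lambda> \<longleftrightarrow>
     (\<forall>l\<in>\<Lambda>. \<forall>m\<in>\<Lambda>. padic_inner p \<Omega> (padic_chi p l) (padic_chi p m) = (if l = m then 1 else 0))
   \<and> (\<forall>f :: (int \<Rightarrow> rat) \<Rightarrow> complex.
        f \<in> borel_measurable (restrict_space (haar_Zp p) \<Omega>)
      \<and> integrable (restrict_space (haar_Zp p) \<Omega>) (\<lambda>x. (cmod (f x))\<^sup>2)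
      \<and> (\<forall>l\<in>\<Lambda>. padic_inner p \<Omega> f (padic_chi p l) = 0)
      \<longrightarrow> (AE x in restrict_space (haar_Zp p) \<Omega>. f x = 0))"

definition padic_Omega :: "nat \<Rightarrow> nat \<Rightarrow> nat set \<Rightarrow> (int \<Rightarrow> rat) set" where
  "padic_Omega p \<gamma> C = (\<Union>c\<in>C. padic_ball p (padic_of_int p (int c)) (- int \<gamma>))"

end

theory Submission
  imports Defs
begin


lemma rmod_diff: "a - rmod a m = m * of_int \<lfloor>a / m\<rfloor>"
  by (simp add: rmod_def)

lemma rmod_bounds: assumes "(m::rat) > 0" shows "0 \<le> rmod a m" "rmod a m < m"
proof -
  have "of_int \<lfloor>a / m\<rfloor> \<le> a / m" by (rule of_int_floor_le)
  hence "m * of_int \<lfloor>a / m\<rfloor> \<le> a" using assms by (metis pos_le_divide_eq mult.commute)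
  thus "0 \<le> rmod a m" by (simp add: rmod_def)
  have "a / m < of_int \<lfloor>a / m\<rfloor> + 1" by linarith
  hence "a < m * of_int \<lfloor>a / m\<rfloor> + m" using assms by (simp add: field_simps)
  thus "rmod a m < m" by (simp add: rmod_def)
qed

lemma rmod_unique: assumes "(m::rat) > 0" "0 \<le> r" "r < m" "a - r = m * of_int z"
  shows "rmod a m = r"
proof -
  have "a / m = of_int z + r / m" using assms by (simp add: field_simps)
  moreover have "0 \<le> r / m" "r / m < 1" using assms by auto
  ultimately have "\<lfloor>a / m\<rfloor> = z" by (simp add: floor_unique)
  hence "rmod a m = a - m * of_int z" by (simp add: rmod_def)
  thus ?thesis using assms(4) by simp
qed

lemma rmod_cong: assumes "(m::rat) > 0" "a - b = m * of_int z" shows "rmod a m = rmod b m"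
proof (rule rmod_unique[OF assms(1) rmod_bounds[OF assms(1)]])
  show "a - rmod b m = m * of_int (z + \<lfloor>b / m\<rfloor>)"
    using assms(2) rmod_diff[of b m] by (simp add: algebra_simps)
qed

lemma rmod_cong_iff: assumes "(m::rat) > 0" shows "rmod a m = rmod b m \<longleftrightarrow> (\<exists>z. a - b = m * of_int z)"
proof
  assume h: "rmod a m = rmod b m"
  have "a - b = (a - rmod a m) - (b - rmod b m)" using h by simp
  also have "\<dots> = m * of_int (\<lfloor>a / m\<rfloor> - \<lfloor>b / m\<rfloor>)" by (simp add: rmod_diff algebra_simps)
  finally show "\<exists>z. a - b = m * of_int z" by blast
qed (use rmod_cong[OF assms] in blast)

lemma rmod_int: "rmod (of_int a) (of_int m) = of_int (a mod m)" if "m > 0"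
proof -
  have "rmod (of_int a) (of_int m) = of_int a - of_int m * of_int (a div m)"
    unfolding rmod_def by (simp add: floor_divide_of_int_eq)
  also have "\<dots> = (of_int (a mod m) :: rat)" by (simp add: minus_div_mult_eq_mod[symmetric] algebra_simps)
  finally show ?thesis .
qed

lemma rmod_nat: "rmod (of_nat a) (of_nat m) = (of_nat (a mod m) :: rat)" if "m > 0"
proof -
  have "rmod (of_nat a) (of_nat m) = (of_int (int a mod int m)::rat)" using rmod_int[of "int m" "int a"] that by simp
  also have "\<dots> = of_nat (a mod m)" by (metis of_int_of_nat_eq zmod_int)
  finally show ?thesis .
qed

lemma Qp_props: assumes "x \<in> Qp p"
  shows "\<And>n. x n \<in> Zinvp p" "\<And>n. 0 \<le> x n" "\<And>n. x n < of_nat p powi n"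
        "\<And>n. x n = rmod (x (n + 1)) (of_nat p powi n)" "\<exists>N. \<forall>n\<le>N. x n = 0"
  using assms unfolding Qp_def by blast+

lemma Qp_chain_diff: assumes "x \<in> Qp p" "p > 0" "n \<le> m"
  shows "\<exists>z. x m - x n = (of_nat p powi n) * of_int z"
  using assms(3)
proof (induction m rule: int_ge_induct)
  case base then show ?case by (intro exI[of _ 0]) simp
next
  case (step m)
  then obtain z where z: "x m - x n = (of_nat p powi n) * of_int z" by blast
  have e: "x m = rmod (x (m + 1)) (of_nat p powi m)" using Qp_props(4)[OF assms(1)] by blast
  have pm: "(of_nat p powi m :: rat) = of_nat p powi n * of_nat p ^ nat (m - n)"
  proof -
    have "(of_nat p powi m :: rat) = of_nat p powi (n + (m - n))" by simp
    also have "\<dots> = of_nat p powi n * of_nat p powi (m - n)"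
      by (rule power_int_add) (use assms(2) in simp)
    also have "(of_nat p powi (m - n) :: rat) = of_nat p ^ nat (m - n)"
      using step(1) by (simp add: power_int_def)
    finally show ?thesis .
  qed
  have "x (m+1) - x n = (x (m + 1) - x m) + (x m - x n)" by simp
  also have "x (m + 1) - x m = (of_nat p powi m) * of_int \<lfloor>x (m+1) / (of_nat p powi m)\<rfloor>"
    using e rmod_diff by metis
  finally have "x (m+1) - x n = of_nat p powi m * of_int \<lfloor>x (m+1) / (of_nat p powi m)\<rfloor> + of_nat p powi n * of_int z"
    using z by simp
  also have "\<dots> = of_nat p powi n * (of_nat p ^ nat (m - n) * of_int \<lfloor>x (m+1) / (of_nat p powi m)\<rfloor> + of_int z)"
    unfolding pm by (simp only: distrib_left mult.assoc)
  also have "\<dots> = of_nat p powi n * of_int (int (p ^ nat (m - n)) * \<lfloor>x (m+1) / (of_nat p powi m)\<rfloor> + z)"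
    by simp
  finally show ?case by blast
qed

lemma Qp_chain: assumes "x \<in> Qp p" "p > 0" "n \<le> m"
  shows "x n = rmod (x m) (of_nat p powi n)"
proof -
  obtain z where z: "x m - x n = (of_nat p powi n) * of_int z" using Qp_chain_diff[OF assms] by blast
  show ?thesis
  proof (rule rmod_unique[symmetric])
    show "0 < (of_nat p powi n :: rat)" using assms(2) by simp
    show "0 \<le> x n" "x n < of_nat p powi n" using Qp_props(2,3)[OF assms(1)] by auto
    show "x m - x n = of_nat p powi n * of_int z" by (rule z)
  qed
qed


definition e :: "rat \<Rightarrow> complex" where "e q = cis (2 * pi * real_of_rat q)"

lemma e_add: "e (q + r) = e q * e r"
  by (simp add: e_def cis_mult of_rat_add distrib_left)

lemma e_int: "e (of_int z) = 1"
proof -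
  have "cis (2 * pi * real_of_int z) = 1" by (rule cis_multiple_2pi) simp
  thus ?thesis by (simp add: e_def)
qed

lemma e_shift: "e (q + of_int z) = e q" by (simp add: e_add e_int)

lemma e_cnj: "cnj (e q) = e (- q)" by (simp add: e_def cis_cnj of_rat_minus)

lemma e_norm[simp]: "norm (e q) = 1" by (simp add: e_def)

lemma e_mult_cnj[simp]: "e q * cnj (e q) = 1"
  by (simp add: e_cnj e_add[symmetric]) (simp add: e_def)

lemma e_nonzero[simp]: "e q \<noteq> 0" by (simp add: e_def)

lemma Zp_int: assumes "x \<in> Qp p" "p > 0" "x 0 = 0" "0 \<le> m"
  shows "x m = of_int \<lfloor>x m\<rfloor>"
proof -
  have "x 0 = rmod (x m) (of_nat p powi 0)" by (rule Qp_chain[OF assms(1,2,4)])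
  hence "0 = x m - of_int \<lfloor>x m\<rfloor>" using assms(3) by (simp add: rmod_def)
  thus ?thesis by simp
qed

lemma Qp_K: assumes "x \<in> Qp p" shows "\<exists>K::nat. x (- int K) = 0"
proof -
  obtain N where N: "\<forall>n\<le>N. x n = 0" using Qp_props(5)[OF assms] by blast
  have "- int (nat (- N)) \<le> N" by simp
  thus ?thesis using N by blast
qed

lemma Qp_denom: assumes "x \<in> Qp p" "p > 0" "x (- int K) = 0" "- int K \<le> m"
  shows "x m * of_nat p ^ K = of_int \<lfloor>x m * of_nat p ^ K\<rfloor>"
proof -
  have "x (- int K) = rmod (x m) (of_nat p powi (- int K))" by (rule Qp_chain[OF assms(1,2,4)])
  hence "x m = of_nat p powi (- int K) * of_int \<lfloor>x m / (of_nat p powi (- int K))\<rfloor>"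
    using assms(3) rmod_diff[of "x m" "of_nat p powi (- int K)"] by (metis diff_zero)
  hence "x m * of_nat p ^ K = of_int \<lfloor>x m / (of_nat p powi (- int K))\<rfloor>"
    using assms(2) by (simp add: power_int_minus field_simps)
  thus ?thesis by (metis floor_of_int)
qed

lemma chi_eval: assumes "a \<in> Qp p" "x \<in> Qp p" "p > 0" "x 0 = 0" "a (- int K) = 0" "K \<le> M"
  shows "padic_chi p a x = e (a (int M) * x (int M))"
proof -
  define v where "v = rmod (a (int M) * x (int M)) 1"
  have ev: "\<forall>m\<ge>int M. rmod (a m * x m) 1 = v"
  proof (intro allI impI)
    fix m assume m: "int M \<le> m"
    obtain al where al: "a m - a (int M) = of_nat p powi (int M) * of_int al"
      using Qp_chain_diff[OF assms(1,3) m] by blast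
    obtain xi where xi: "x m - x (int M) = of_nat p powi (int M) * of_int xi"
      using Qp_chain_diff[OF assms(2,3) m] by blast
    have pM: "(of_nat p powi (int M) :: rat) = of_nat p ^ M" by simp
    have xM: "x (int M) = of_int \<lfloor>x (int M)\<rfloor>" using Zp_int[OF assms(2,3,4)] by simp
    have aM: "a (int M) * of_nat p ^ K = of_int \<lfloor>a (int M) * of_nat p ^ K\<rfloor>"
      using Qp_denom[OF assms(1,3,5)] by simp
    have pK: "(of_nat p ^ M :: rat) = of_nat p ^ K * of_nat p ^ (M - K)"
      using assms(6) by (simp add: power_add[symmetric])
    have aMp: "a (int M) * of_nat p ^ M = of_int (\<lfloor>a (int M) * of_nat p ^ K\<rfloor> * int p ^ (M - K))"
      using aM pK by (simp add: mult.assoc[symmetric])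
    have "a m * x m - a (int M) * x (int M)
        = (a (int M) * of_nat p ^ M) * of_int xi + of_nat p ^ M * of_int al * x (int M)
          + of_nat p ^ M * of_int al * (of_nat p ^ M * of_int xi)"
    proof -
      have "a m = a (int M) + of_nat p ^ M * of_int al" using al pM by simp
      moreover have "x m = x (int M) + of_nat p ^ M * of_int xi" using xi pM by simp
      ultimately show ?thesis by (simp add: algebra_simps)
    qed
    also have "\<dots> = of_int (\<lfloor>a (int M) * of_nat p ^ K\<rfloor> * int p ^ (M - K) * xi
        + int p ^ M * al * \<lfloor>x (int M)\<rfloor> + int p ^ M * al * (int p ^ M * xi))"
      by (subst aMp, subst xM) simp
    finally have "a m * x m - a (int M) * x (int M) = 1 * of_int (\<lfloor>a (int M) * of_nat p ^ K\<rfloor> * int p ^ (M - K) * xi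
        + int p ^ M * al * \<lfloor>x (int M)\<rfloor> + int p ^ M * al * (int p ^ M * xi))" by simp
    from rmod_cong[OF _ this] show "rmod (a m * x m) 1 = v" unfolding v_def by simp
  qed
  have "padic_mult p a x 0 = v"
    unfolding padic_mult_def
  proof (rule the_equality)
    show "\<exists>M. \<forall>m\<ge>M. rmod (a m * x m) (of_nat p powi 0) = v" using ev by auto
  next
    fix q assume "\<exists>M. \<forall>m\<ge>M. rmod (a m * x m) (of_nat p powi 0) = q"
    then obtain M1 where M1: "\<forall>m\<ge>M1. rmod (a m * x m) 1 = q" by auto
    have "rmod (a (max M1 (int M)) * x (max M1 (int M))) 1 = q" using M1 by simp
    moreover have "rmod (a (max M1 (int M)) * x (max M1 (int M))) 1 = v" using ev by simp
    ultimately show "q = v" by simp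
  qed
  hence "padic_chi p a x = e v" by (simp add: padic_chi_def padic_frac_def e_def)
  also have "v = a (int M) * x (int M) + of_int (- \<lfloor>a (int M) * x (int M)\<rfloor>)"
    by (simp add: v_def rmod_def)
  finally show ?thesis by (simp only: e_shift)
qed



definition S :: "nat \<Rightarrow> nat \<Rightarrow> (nat \<Rightarrow> nat) \<Rightarrow> nat" where
  "S p M d = (\<Sum>k<M. d k * p ^ k)"

abbreviation PM :: "nat \<Rightarrow> (nat \<Rightarrow> nat) measure" where
  "PM p \<equiv> PiM (UNIV :: nat set) (\<lambda>_. uniform_count_measure {0..<p})"

abbreviation QM :: "(int \<Rightarrow> rat) measure" where
  "QM \<equiv> PiM (UNIV :: int set) (\<lambda>_. count_space UNIV)"

lemma space_PM: "space (PM p) = {d. \<forall>k. d k < p}"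
  by (auto simp: space_PiM space_uniform_count_measure PiE_def extensional_def Pi_def)

lemma S_Suc: "S p (Suc M) d = S p M d + d M * p ^ M"
  by (simp add: S_def)

lemma S_lt: assumes "\<forall>k. d k < p" shows "S p M d < p ^ M"
proof (induction M)
  case 0 then show ?case by (simp add: S_def)
next
  case (Suc M)
  have "d M \<le> p - 1" using assms[rule_format, of M] by arith
  hence "d M * p ^ M \<le> (p - 1) * p ^ M" by simp
  moreover have "S p M d + 1 \<le> p ^ M" using Suc by simp
  ultimately have "S p M d + d M * p ^ M + 1 \<le> p ^ M + (p - 1) * p ^ M" by linarith
  also have "\<dots> = p ^ Suc M" using assms by (cases p) (auto simp: algebra_simps)
  finally show ?case by (simp add: S_Suc)
qed

lemma S_mod: assumes "\<forall>k. d k < p" "k \<le> M" shows "S p M d mod p ^ k = S p k d"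
  using assms(2)
proof (induction M rule: dec_induct)
  case base then show ?case using S_lt[OF assms(1)] by simp
next
  case (step M)
  have "p ^ M = p ^ k * p ^ (M - k)" using step(1) by (simp add: power_add[symmetric])
  hence "S p (Suc M) d = S p M d + p ^ k * (d M * p ^ (M - k))" by (simp add: S_Suc algebra_simps)
  hence "S p (Suc M) d mod p ^ k = S p M d mod p ^ k" by simp
  then show ?case using step by simp
qed

lemma div_mod_digit: "(x::nat) div b mod c = (x mod (b * c)) div b" if "b > 0"
proof -
  have "x mod (b * c) = b * (x div b mod c) + x mod b" by (rule mod_mult2_eq)
  moreover have "x mod b < b" using that by simp
  ultimately show ?thesis using that by simp
qed

lemma S_digit: assumes "\<forall>k. d k < p" "k < M" shows "S p M d div p ^ k mod p = d k"
proof -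
  have p: "p > 0" using assms(1) by (metis gr_zeroI not_less_zero)
  have "S p M d div p ^ k mod p = (S p M d mod (p ^ k * p)) div p ^ k"
    by (rule div_mod_digit) (simp add: p)
  also have "\<dots> = S p (Suc k) d div p ^ k"
    using S_mod[OF assms(1), of "Suc k" M] assms(2) by (simp add: mult.commute)
  also have "\<dots> = (S p k d + d k * p ^ k) div p ^ k" by (simp add: S_Suc)
  also have "\<dots> = d k" using S_lt[OF assms(1), of k] p by simp
  finally show ?thesis .
qed

lemma S_expand: assumes "p > 0" shows "S p M (\<lambda>k. j div p ^ k mod p) = j mod p ^ M"
proof (induction M)
  case 0 then show ?case by (simp add: S_def)
next
  case (Suc M)
  have "j mod (p ^ M * p) = p ^ M * (j div p ^ M mod p) + j mod p ^ M" by (rule mod_mult2_eq)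
  then show ?case using Suc by (simp add: S_Suc algebra_simps)
qed

lemma S_preimage: assumes "p > 0" "j < p ^ M"
  shows "{d \<in> space (PM p). S p M d = j}
       = prod_emb UNIV (\<lambda>_. uniform_count_measure {0..<p}) {..<M} (PiE {..<M} (\<lambda>k. {j div p ^ k mod p}))"
proof (intro set_eqI iffI)
  fix d assume "d \<in> {d \<in> space (PM p). S p M d = j}"
  hence d: "\<forall>k. d k < p" "S p M d = j" by (auto simp: space_PM)
  show "d \<in> prod_emb UNIV (\<lambda>_. uniform_count_measure {0..<p}) {..<M} (PiE {..<M} (\<lambda>k. {j div p ^ k mod p}))"
    using S_digit[OF d(1)] d by (auto simp: prod_emb_def space_PM PiE_def extensional_def restrict_def space_uniform_count_measure)
next
  fix d assume "d \<in> prod_emb UNIV (\<lambda>_. uniform_count_measure {0..<p}) {..<M} (PiE {..<M} (\<lambda>k. {j div p ^ k mod p}))"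
  hence d: "\<forall>k. d k < p" "\<forall>k<M. d k = j div p ^ k mod p"
    by (auto simp: prod_emb_def space_PM PiE_def restrict_def space_uniform_count_measure Pi_iff)
  have "S p M d = S p M (\<lambda>k. j div p ^ k mod p)" unfolding S_def using d(2) by simp
  also have "\<dots> = j" using S_expand[OF assms(1)] assms(2) by simp
  finally show "d \<in> {d \<in> space (PM p). S p M d = j}" using d(1) by (simp add: space_PM)
qed

lemma S_measurable: assumes "p > 0" shows "S p M \<in> measurable (PM p) (count_space UNIV)"
proof (subst measurable_count_space_eq2_countable, intro conjI ballI)
  fix j :: nat
  show "S p M -` {j} \<inter> space (PM p) \<in> sets (PM p)"
  proof (cases "j < p ^ M")
    case True
    have "S p M -` {j} \<inter> space (PM p) = {d \<in> space (PM p). S p M d = j}" by auto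
    also have "\<dots> = prod_emb UNIV (\<lambda>_. uniform_count_measure {0..<p}) {..<M} (PiE {..<M} (\<lambda>k. {j div p ^ k mod p}))"
      by (rule S_preimage[OF assms True])
    also have "\<dots> \<in> sets (PM p)"
      by (rule sets_PiM_I) (use assms in \<open>auto simp: sets_uniform_count_measure\<close>)
    finally show ?thesis .
  next
    case False
    hence "S p M -` {j} \<inter> space (PM p) = {}"
      using S_lt by (auto simp: space_PM)
    then show ?thesis by simp
  qed
qed simp

lemma S_measure: assumes "p > 0" "j < p ^ M"
  shows "measure (PM p) {d \<in> space (PM p). S p M d = j} = 1 / real p ^ M"
proof -
  have "emeasure (PM p) {d \<in> space (PM p). S p M d = j}
      = (\<Prod>k\<in>{..<M}. emeasure (uniform_count_measure {0..<p}) {j div p ^ k mod p})"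
    unfolding S_preimage[OF assms]
    by (rule emeasure_PiM_emb) (use assms in \<open>auto simp: prob_space_uniform_count_measure sets_uniform_count_measure\<close>)
  also have "\<dots> = (\<Prod>k\<in>{..<M}. ennreal (1 / real p))"
    using assms by (intro prod.cong refl) (simp add: emeasure_uniform_count_measure ennreal_of_nat_eq_real_of_nat divide_ennreal)
  also have "\<dots> = ennreal (1 / real p ^ M)"
    by (simp add: ennreal_power power_one_over)
  finally show ?thesis by (simp add: measure_def)
qed



lemma Qp_pred[measurable]: "Measurable.pred QM (\<lambda>x. x \<in> Qp p)"
  unfolding Qp_def mem_Collect_eq
  by measurable

lemma space_QM: "space QM = UNIV"
  by (simp add: space_PiM)

lemma digits_S: "digits_to_Qp p d (int M) = of_nat (S p M d)"
  by (simp add: digits_to_Qp_def S_def)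

lemma digits_Qp: assumes "p > 0" "\<forall>k. d k < p" shows "digits_to_Qp p d \<in> Qp p"
  unfolding Qp_def mem_Collect_eq
proof (intro conjI allI exI[of _ 0])
  fix n :: int
  show "digits_to_Qp p d n \<in> Zinvp p"
    unfolding Zinvp_def digits_to_Qp_def
    by (rule CollectI, rule exI[of _ "if n \<le> 0 then 0 else int (\<Sum>k<nat n. d k * p ^ k)"], rule exI[of _ 0]) simp
  show "0 \<le> digits_to_Qp p d n" by (simp add: digits_to_Qp_def sum_nonneg)
  show "digits_to_Qp p d n < of_nat p powi n"
  proof (cases "n \<le> 0")
    case True then show ?thesis using assms(1) by (simp add: digits_to_Qp_def)
  next
    case False
    define m where "m = nat n"
    have m: "n = int m" using False unfolding m_def by simp
    have "S p m d < p ^ m" by (rule S_lt[OF assms(2)])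
    hence "(of_nat (S p m d) :: rat) < of_nat (p ^ m)" by (simp only: of_nat_less_iff)
    then show ?thesis using digits_S[of p d m] m by simp
  qed
  show "digits_to_Qp p d n = rmod (digits_to_Qp p d (n + 1)) (of_nat p powi n)"
  proof (cases "n < 0")
    case True then show ?thesis by (simp add: digits_to_Qp_def rmod_def)
  next
    case False
    define m where "m = nat n"
    have m: "n = int m" using False unfolding m_def by simp
    have "rmod (digits_to_Qp p d (n + 1)) (of_nat p powi n) = rmod (of_nat (S p (Suc m) d)) (of_nat (p ^ m))"
      using digits_S[of p d "Suc m"] m by (simp add: add.commute)
    also have "\<dots> = of_nat (S p (Suc m) d mod p ^ m)" by (rule rmod_nat) (use assms in simp)
    also have "\<dots> = of_nat (S p m d)" using S_mod[OF assms(2), of m "Suc m"] by simp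
    also have "\<dots> = digits_to_Qp p d n" using digits_S[of p d m] m by simp
    finally show ?thesis by simp
  qed
qed (auto simp add: digits_to_Qp_def)

lemma digits_measurable: assumes "p > 0" shows "digits_to_Qp p \<in> measurable (PM p) QM"
proof -
  have "(\<lambda>d n. digits_to_Qp p d n) \<in> measurable (PM p) QM"
  proof (rule measurable_PiM_single')
    fix n :: int
    have "(\<lambda>d. if n \<le> 0 then 0 else (of_nat (S p (nat n) d) :: rat)) \<in> measurable (PM p) (count_space UNIV)"
    proof (cases "n \<le> 0")
      case False
      have "(\<lambda>d. (of_nat (S p (nat n) d) :: rat)) \<in> measurable (PM p) (count_space UNIV)"
        by (rule measurable_compose[OF S_measurable[OF assms]]) simp
      then show ?thesis using False by simp
    qed simp
    then show "(\<lambda>d. digits_to_Qp p d n) \<in> measurable (PM p) (count_space UNIV)"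
      unfolding digits_to_Qp_def S_def[symmetric] .
  qed simp
  thus ?thesis by simp
qed

lemma Omega_eq: assumes "p > 0" "C \<subseteq> {0..<p ^ \<gamma>}"
  shows "padic_Omega p \<gamma> C = {x \<in> Qp p. \<exists>c\<in>C. x (int \<gamma>) = of_nat c}"
proof -
  have "\<And>c. c \<in> C \<Longrightarrow> padic_of_int p (int c) (int \<gamma>) = of_nat c"
  proof -
    fix c assume c: "c \<in> C"
    have "padic_of_int p (int c) (int \<gamma>) = rmod (of_nat c) (of_nat (p ^ \<gamma>))"
      by (simp add: padic_of_int_def)
    also have "\<dots> = of_nat (c mod p ^ \<gamma>)" by (rule rmod_nat) (use assms in simp)
    also have "\<dots> = of_nat c" using c assms(2) by auto
    finally show "padic_of_int p (int c) (int \<gamma>) = of_nat c" .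
  qed
  thus ?thesis unfolding padic_Omega_def padic_ball_def by auto
qed

lemma Omega_sets: "{x \<in> Qp p. \<exists>c\<in>C. x (int \<gamma>) = of_nat c} \<in> sets QM"
proof -
  have "{x \<in> space QM. x \<in> Qp p \<and> (\<exists>c\<in>C. x (int \<gamma>) = of_nat c)} \<in> sets QM" by measurable
  thus ?thesis by (simp add: space_QM)
qed



lemma PM_prob: "p > 0 \<Longrightarrow> prob_space (PM p)"
  by (rule prob_space_PiM) (auto intro!: prob_space_uniform_count_measure)

lemma S_sets: assumes "p > 0" shows "{d \<in> space (PM p). S p M d = j} \<in> sets (PM p)"
proof -
  have "S p M -` {j} \<inter> space (PM p) \<in> sets (PM p)"
    by (rule measurable_sets[OF S_measurable[OF assms]]) simp
  moreover have "S p M -` {j} \<inter> space (PM p) = {d \<in> space (PM p). S p M d = j}" by auto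
  ultimately show ?thesis by simp
qed

lemma INT_PM:
  fixes H :: "nat \<Rightarrow> 'b::{banach, second_countable_topology}"
  assumes p: "p > 0"
  shows "integrable (PM p) (\<lambda>d. H (S p M d))"
    "integral\<^sup>L (PM p) (\<lambda>d. H (S p M d)) = (1 / real p ^ M) *\<^sub>R (\<Sum>j<p ^ M. H j)"
proof -
  interpret prob_space "PM p" by (rule PM_prob[OF p])
  define A where "A j = {d \<in> space (PM p). S p M d = j}" for j
  have As: "A j \<in> sets (PM p)" for j unfolding A_def by (rule S_sets[OF p])
  have key: "H (S p M d) = (\<Sum>j<p ^ M. indicator (A j) d *\<^sub>R H j)" if d: "d \<in> space (PM p)" for d
  proof -
    have "(\<Sum>j<p ^ M. indicator (A j) d *\<^sub>R H j) = (\<Sum>j<p ^ M. if S p M d = j then H j else 0)"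
      using d by (intro sum.cong refl) (auto simp: A_def indicator_def)
    also have "\<dots> = H (S p M d)" using S_lt[of d p M] d by (simp add: space_PM)
    finally show ?thesis by simp
  qed
  have ind: "integrable (PM p) (indicator (A j) :: _ \<Rightarrow> real)" for j
    by (rule integrable_real_indicator[OF As]) (simp add: emeasure_eq_measure)
  have int: "integrable (PM p) (\<lambda>d. indicator (A j) d *\<^sub>R H j)" for j
    by (rule integrable_scaleR_left) (rule ind)
  have "integrable (PM p) (\<lambda>d. \<Sum>j<p ^ M. indicator (A j) d *\<^sub>R H j)"
    using int by (intro Bochner_Integration.integrable_sum) auto
  thus "integrable (PM p) (\<lambda>d. H (S p M d))"
    by (subst Bochner_Integration.integrable_cong[OF refl key]) auto
  have "integral\<^sup>L (PM p) (\<lambda>d. H (S p M d)) = integral\<^sup>L (PM p) (\<lambda>d. \<Sum>j<p ^ M. indicator (A j) d *\<^sub>R H j)"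
    by (rule Bochner_Integration.integral_cong[OF refl key])
  also have "\<dots> = (\<Sum>j<p ^ M. integral\<^sup>L (PM p) (\<lambda>d. indicator (A j) d *\<^sub>R H j))"
    using int by (intro Bochner_Integration.integral_sum) auto
  also have "\<dots> = (\<Sum>j<p ^ M. (1 / real p ^ M) *\<^sub>R H j)"
  proof (intro sum.cong refl)
    fix j assume j: "j \<in> {..<p ^ M}"
    have "integral\<^sup>L (PM p) (\<lambda>d. indicator (A j) d *\<^sub>R H j) = integral\<^sup>L (PM p) (indicator (A j)) *\<^sub>R H j"
      by (rule integral_scaleR_left) (rule ind)
    also have "integral\<^sup>L (PM p) (indicator (A j) :: _ \<Rightarrow> real) = measure (PM p) (A j)"
      using As by (simp add: Int_absorb2 sets.sets_into_space)
    also have "\<dots> = 1 / real p ^ M" unfolding A_def by (rule S_measure[OF p]) (use j in simp)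
    finally show "integral\<^sup>L (PM p) (\<lambda>d. indicator (A j) d *\<^sub>R H j) = (1 / real p ^ M) *\<^sub>R H j" .
  qed
  also have "\<dots> = (1 / real p ^ M) *\<^sub>R (\<Sum>j<p ^ M. H j)" by (simp add: scaleR_sum_right)
  finally show "integral\<^sup>L (PM p) (\<lambda>d. H (S p M d)) = (1 / real p ^ M) *\<^sub>R (\<Sum>j<p ^ M. H j)" .
qed

lemma haar_eq: "haar_Zp p = distr (PM p) QM (digits_to_Qp p)"
  by (simp add: haar_Zp_def)

lemma INT:
  fixes h :: "rat \<Rightarrow> 'b::{banach, second_countable_topology}"
  assumes p: "p > 0" and C: "C \<subseteq> {0..<p ^ \<gamma>}" and M: "\<gamma> \<le> M"
    and F: "\<And>x. x \<in> padic_Omega p \<gamma> C \<Longrightarrow> F x = h (x (int M))"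
  shows "integrable (restrict_space (haar_Zp p) (padic_Omega p \<gamma> C)) F"
    "integral\<^sup>L (restrict_space (haar_Zp p) (padic_Omega p \<gamma> C)) F
      = (1 / real p ^ M) *\<^sub>R (\<Sum>j\<in>{j. j < p ^ M \<and> j mod p ^ \<gamma> \<in> C}. h (of_nat j))"
proof -
  define \<Omega> where "\<Omega> = padic_Omega p \<gamma> C"
  have \<Omega>e: "\<Omega> = {x \<in> Qp p. \<exists>c\<in>C. x (int \<gamma>) = of_nat c}" unfolding \<Omega>_def by (rule Omega_eq[OF p C])
  have sp: "space (haar_Zp p) = UNIV" by (simp add: haar_eq space_QM)
  have \<Omega>s: "\<Omega> \<inter> space (haar_Zp p) \<in> sets (haar_Zp p)"
    using Omega_sets[of p C \<gamma>] by (simp add: sp \<Omega>e haar_eq)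
  define G where "G x = indicator \<Omega> x *\<^sub>R h (x (int M))" for x
  have Gm: "G \<in> borel_measurable QM"
  proof -
    have "(\<lambda>x. h (x (int M))) \<in> borel_measurable QM"
      by (rule measurable_compose[OF measurable_component_singleton]) auto
    moreover have "\<Omega> \<in> sets QM" using Omega_sets[of p C \<gamma>] by (simp add: \<Omega>e)
    ultimately show ?thesis unfolding G_def by measurable
  qed
  define H where "H j = (if j mod p ^ \<gamma> \<in> C then h (of_nat j) else 0)" for j
  have GH: "G (digits_to_Qp p d) = H (S p M d)" if d: "d \<in> space (PM p)" for d
  proof -
    have dd: "\<forall>k. d k < p" using d by (simp add: space_PM)
    have inQ: "digits_to_Qp p d \<in> Qp p" by (rule digits_Qp[OF p dd])
    have g: "digits_to_Qp p d (int \<gamma>) = of_nat (S p M d mod p ^ \<gamma>)"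
      using digits_S[of p d \<gamma>] S_mod[OF dd M] by simp
    have "digits_to_Qp p d \<in> \<Omega> \<longleftrightarrow> S p M d mod p ^ \<gamma> \<in> C"
      using inQ g by (auto simp: \<Omega>e)
    thus ?thesis by (simp add: G_def H_def digits_S indicator_def)
  qed
  have dm: "digits_to_Qp p \<in> measurable (PM p) QM" by (rule digits_measurable[OF p])
  have I1: "integrable (PM p) (\<lambda>d. G (digits_to_Qp p d))"
    using INT_PM(1)[OF p, of H M] by (subst Bochner_Integration.integrable_cong[OF refl GH]) auto
  have E1: "integral\<^sup>L (PM p) (\<lambda>d. G (digits_to_Qp p d)) = (1 / real p ^ M) *\<^sub>R (\<Sum>j<p ^ M. H j)"
    using INT_PM(2)[OF p, of H M] by (subst Bochner_Integration.integral_cong[OF refl GH]) auto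
  have I2: "integrable (haar_Zp p) G"
    unfolding haar_eq using I1 by (subst integrable_distr_eq[OF dm Gm])
  have E2: "integral\<^sup>L (haar_Zp p) G = (1 / real p ^ M) *\<^sub>R (\<Sum>j<p ^ M. H j)"
    unfolding haar_eq using E1 by (subst integral_distr[OF dm Gm])
  have FG: "F x = h (x (int M))" if "x \<in> space (restrict_space (haar_Zp p) \<Omega>)" for x
    using that F by (auto simp: space_restrict_space \<Omega>_def)
  have "integrable (restrict_space (haar_Zp p) \<Omega>) (\<lambda>x. h (x (int M)))"
    using I2 by (subst integrable_restrict_space[OF \<Omega>s]) (simp add: G_def[abs_def])
  thus "integrable (restrict_space (haar_Zp p) (padic_Omega p \<gamma> C)) F"
    unfolding \<Omega>_def[symmetric] by (subst Bochner_Integration.integrable_cong[OF refl FG]) auto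
  have "integral\<^sup>L (restrict_space (haar_Zp p) \<Omega>) F = integral\<^sup>L (restrict_space (haar_Zp p) \<Omega>) (\<lambda>x. h (x (int M)))"
    by (rule Bochner_Integration.integral_cong[OF refl FG])
  also have "\<dots> = integral\<^sup>L (haar_Zp p) G"
    by (subst integral_restrict_space[OF \<Omega>s]) (simp add: G_def[abs_def])
  also have "\<dots> = (1 / real p ^ M) *\<^sub>R (\<Sum>j<p ^ M. H j)" by (rule E2)
  also have "(\<Sum>j<p ^ M. H j) = (\<Sum>j\<in>{j. j < p ^ M \<and> j mod p ^ \<gamma> \<in> C}. h (of_nat j))"
  proof -
    have "(\<Sum>j<p ^ M. H j) = (\<Sum>j\<in>{..<p ^ M} \<inter> {j. j mod p ^ \<gamma> \<in> C}. h (of_nat j))"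
      unfolding H_def by (simp add: sum.inter_restrict)
    also have "{..<p ^ M} \<inter> {j. j mod p ^ \<gamma> \<in> C} = {j. j < p ^ M \<and> j mod p ^ \<gamma> \<in> C}" by auto
    finally show ?thesis .
  qed
  finally show "integral\<^sup>L (restrict_space (haar_Zp p) (padic_Omega p \<gamma> C)) F
      = (1 / real p ^ M) *\<^sub>R (\<Sum>j\<in>{j. j < p ^ M \<and> j mod p ^ \<gamma> \<in> C}. h (of_nat j))"
    unfolding \<Omega>_def .
qed



lemma e_eq_1: assumes "e q = 1" shows "\<exists>z. q = of_int z"
proof -
  have "exp (\<i> * complex_of_real (2 * pi * real_of_rat q)) = 1"
    using assms by (simp add: e_def cis_conv_exp)
  then obtain n :: int where n: "2 * pi * real_of_rat q = of_int (2 * n) * pi"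
    by (auto simp: exp_eq_1)
  hence "real_of_rat q = real_of_rat (of_int n)" by (simp add: algebra_simps)
  hence "q = of_int n" by (simp only: of_rat_eq_iff)
  thus ?thesis by blast
qed

lemma e_pow: "e q ^ k = e (of_nat k * q)"
proof (induction k)
  case 0 then show ?case by (simp add: e_def)
next
  case (Suc k)
  have "e q ^ Suc k = e q * e (of_nat k * q)" using Suc by simp
  also have "\<dots> = e (q + of_nat k * q)" by (simp add: e_add)
  finally show ?case by (simp add: algebra_simps)
qed

lemma sum_split_mult: fixes f :: "nat \<Rightarrow> 'a::comm_monoid_add"
  shows "(\<Sum>j<A * B. f j) = (\<Sum>c<A. \<Sum>k<B. f (c + A * k))"
proof (induction B)
  case 0 then show ?case by simp
next
  case (Suc B)
  have "(\<Sum>j<A * Suc B. f j) = (\<Sum>j<A * B + A. f j)" by (simp add: algebra_simps)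
  also have "\<dots> = (\<Sum>j<A * B. f j) + (\<Sum>j\<in>{A * B..<A * B + A}. f j)"
    by (simp add: sum.atLeastLessThan_concat[symmetric] lessThan_atLeast0)
  also have "(\<Sum>j\<in>{A * B..<A * B + A}. f j) = (\<Sum>c<A. f (c + A * B))"
  proof -
    have "(\<Sum>j\<in>{A * B..<A * B + A}. f j) = (\<Sum>j\<in>{0 + A * B..<A + A * B}. f j)" by (simp add: add.commute)
    also have "\<dots> = (\<Sum>c\<in>{0..<A}. f (c + A * B))" by (rule sum.shift_bounds_nat_ivl)
    finally show ?thesis by (simp add: lessThan_atLeast0)
  qed
  finally show ?case using Suc by (simp add: sum.distrib)
qed

lemma geo_zero:
  assumes nz: "\<nexists>z. s = of_int z" and pe: "s * of_nat N = of_int w"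
  shows "(\<Sum>k<N. e (s * of_nat k)) = 0"
proof -
  have ne: "e s \<noteq> 1" using e_eq_1 nz by blast
  have "(\<Sum>k<N. e (s * of_nat k)) = (\<Sum>k<N. e s ^ k)" by (simp add: e_pow mult.commute)
  also have "\<dots> = (1 - e s ^ N) / (1 - e s)" using ne by (simp add: sum_gp_strict)
  also have "e s ^ N = 1" using pe by (simp add: e_pow mult.commute e_int)
  finally show ?thesis by simp
qed

lemma char_sum_zero:
  fixes g :: "nat \<Rightarrow> complex" and t :: rat
  assumes p: "p > 0" and M: "\<gamma> \<le> M" and C: "C \<subseteq> {0..<p ^ \<gamma>}"
    and nz: "\<nexists>z. t * of_nat p ^ \<gamma> = of_int z" and pe: "t * of_nat p ^ M = of_int w"
  shows "(\<Sum>j\<in>{j. j < p ^ M \<and> j mod p ^ \<gamma> \<in> C}. e (t * of_nat j) * g (j mod p ^ \<gamma>)) = 0"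
proof -
  define A where "A = p ^ \<gamma>"
  define B where "B = p ^ (M - \<gamma>)"
  have A: "A > 0" using p by (simp add: A_def)
  have AB: "p ^ M = A * B" using M by (simp add: A_def B_def power_add[symmetric])
  define f where "f j = (if j mod A \<in> C then e (t * of_nat j) * g (j mod A) else 0)" for j
  have "(\<Sum>j\<in>{j. j < p ^ M \<and> j mod p ^ \<gamma> \<in> C}. e (t * of_nat j) * g (j mod p ^ \<gamma>)) = (\<Sum>j<A * B. f j)"
  proof -
    have "(\<Sum>j<A * B. f j) = (\<Sum>j\<in>{..<A * B} \<inter> {j. j mod A \<in> C}. e (t * of_nat j) * g (j mod A))"
      unfolding f_def by (simp add: sum.inter_restrict)
    also have "{..<A * B} \<inter> {j. j mod A \<in> C} = {j. j < p ^ M \<and> j mod p ^ \<gamma> \<in> C}" by (auto simp: AB A_def)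
    finally show ?thesis by (simp add: A_def)
  qed
  also have "\<dots> = (\<Sum>c<A. \<Sum>k<B. f (c + A * k))" by (rule sum_split_mult)
  also have "\<dots> = (\<Sum>c<A. (if c \<in> C then e (t * of_nat c) * g c else 0) * (\<Sum>k<B. e ((t * of_nat A) * of_nat k)))"
  proof (intro sum.cong refl)
    fix c assume c: "c \<in> {..<A}"
    have "f (c + A * k) = (if c \<in> C then e (t * of_nat c) * g c else 0) * e ((t * of_nat A) * of_nat k)" for k
      using c by (simp add: f_def e_add[symmetric] algebra_simps)
    thus "(\<Sum>k<B. f (c + A * k)) = (if c \<in> C then e (t * of_nat c) * g c else 0) * (\<Sum>k<B. e ((t * of_nat A) * of_nat k))"
      by (simp add: sum_distrib_left)
  qed
  also have "(\<Sum>k<B. e ((t * of_nat A) * of_nat k)) = 0"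
  proof (rule geo_zero)
    show "\<nexists>z. t * of_nat A = of_int z" using nz by (simp add: A_def)
    have "(of_nat p ^ M :: rat) = of_nat A * of_nat B" by (simp only: of_nat_power[symmetric] AB of_nat_mult)
    thus "t * of_nat A * of_nat B = of_int w" using pe by (simp add: mult.assoc)
  qed
  finally show ?thesis by simp
qed



lemma bessel:
  fixes \<kappa> :: "'l \<Rightarrow> nat \<Rightarrow> complex" and C :: "nat set"
  assumes C: "finite C" "c0 \<in> C" and F: "finite F"
    and orth: "\<And>l m. l \<in> F \<Longrightarrow> m \<in> F \<Longrightarrow> (\<Sum>c\<in>C. \<kappa> l c * cnj (\<kappa> m c)) = (if l = m then of_nat (card C) else 0)"
    and unit: "\<And>l. l \<in> F \<Longrightarrow> \<kappa> l c0 * cnj (\<kappa> l c0) = 1"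
    and r: "\<And>d. r d = (if d = c0 then 1 else 0) - (\<Sum>l\<in>F. cnj (\<kappa> l c0) * \<kappa> l d) / of_nat (card C)"
  shows bessel_orth: "\<And>m. m \<in> F \<Longrightarrow> (\<Sum>d\<in>C. r d * cnj (\<kappa> m d)) = 0"
    and bessel_norm: "(\<Sum>d\<in>C. r d * cnj (r d)) = 1 - of_nat (card F) / of_nat (card C)"
proof -
  define n where "n = (of_nat (card C) :: complex)"
  have n0: "n \<noteq> 0" using C by (auto simp: n_def card_gt_0_iff)
  have O: "(\<Sum>d\<in>C. r d * cnj (\<kappa> m d)) = 0" if m: "m \<in> F" for m
  proof -
    have pt: "r d * cnj (\<kappa> m d) = (if d = c0 then cnj (\<kappa> m d) else 0) - (\<Sum>l\<in>F. cnj (\<kappa> l c0) * (\<kappa> l d * cnj (\<kappa> m d))) / n" for d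
      by (cases "d = c0") (simp_all add: r n_def[symmetric] left_diff_distrib sum_distrib_right mult.assoc)
    have "(\<Sum>d\<in>C. r d * cnj (\<kappa> m d))
        = (\<Sum>d\<in>C. (if d = c0 then cnj (\<kappa> m d) else 0)) - (\<Sum>d\<in>C. (\<Sum>l\<in>F. cnj (\<kappa> l c0) * (\<kappa> l d * cnj (\<kappa> m d)))) / n"
      by (simp only: pt sum_subtractf sum_divide_distrib[symmetric])
    also have "(\<Sum>d\<in>C. (if d = c0 then cnj (\<kappa> m d) else 0)) = cnj (\<kappa> m c0)" using C by simp
    also have "(\<Sum>d\<in>C. (\<Sum>l\<in>F. cnj (\<kappa> l c0) * (\<kappa> l d * cnj (\<kappa> m d))))
        = (\<Sum>l\<in>F. cnj (\<kappa> l c0) * (\<Sum>d\<in>C. \<kappa> l d * cnj (\<kappa> m d)))"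
      by (subst sum.swap) (simp add: sum_distrib_left)
    also have "\<dots> = (\<Sum>l\<in>F. if l = m then cnj (\<kappa> l c0) * n else 0)"
      using orth m by (intro sum.cong refl) (simp add: n_def)
    also have "\<dots> = cnj (\<kappa> m c0) * n" using F m by simp
    finally show ?thesis using n0 by simp
  qed
  thus "\<And>m. m \<in> F \<Longrightarrow> (\<Sum>d\<in>C. r d * cnj (\<kappa> m d)) = 0" by blast
  have cr: "cnj (r d) = (if d = c0 then 1 else 0) - (\<Sum>l\<in>F. \<kappa> l c0 * cnj (\<kappa> l d)) / n" for d
    by (simp add: r n_def cnj_sum mult.commute)
  have "(\<Sum>d\<in>C. r d * cnj (r d))
      = (\<Sum>d\<in>C. (if d = c0 then r d else 0)) - (\<Sum>d\<in>C. \<Sum>l\<in>F. \<kappa> l c0 * (r d * cnj (\<kappa> l d))) / n"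
  proof -
    have pt: "r d * cnj (r d) = (if d = c0 then r d else 0) - (\<Sum>l\<in>F. \<kappa> l c0 * (r d * cnj (\<kappa> l d))) / n" for d
      by (cases "d = c0") (simp_all add: cr right_diff_distrib sum_distrib_left mult.assoc mult.left_commute)
    show ?thesis by (simp only: pt sum_subtractf sum_divide_distrib[symmetric])
  qed
  also have "(\<Sum>d\<in>C. (if d = c0 then r d else 0)) = r c0" using C by simp
  also have "(\<Sum>d\<in>C. \<Sum>l\<in>F. \<kappa> l c0 * (r d * cnj (\<kappa> l d))) = (\<Sum>l\<in>F. \<kappa> l c0 * (\<Sum>d\<in>C. r d * cnj (\<kappa> l d)))"
    by (subst sum.swap) (simp add: sum_distrib_left)
  also have "\<dots> = 0" using O by simp
  also have "r c0 = 1 - (\<Sum>l\<in>F. 1) / n"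
    using unit by (simp add: r n_def mult.commute)
  finally show "(\<Sum>d\<in>C. r d * cnj (r d)) = 1 - of_nat (card F) / of_nat (card C)" by (simp add: n_def)
qed



lemma Omega_props: assumes p: "p > 0" and C: "C \<subseteq> {0..<p ^ \<gamma>}" and x: "x \<in> padic_Omega p \<gamma> C"
  shows "x \<in> Qp p" "x 0 = 0" "\<exists>c\<in>C. x (int \<gamma>) = of_nat c"
proof -
  from x obtain c where xq: "x \<in> Qp p" and c: "c \<in> C" "x (int \<gamma>) = of_nat c"
    by (auto simp: Omega_eq[OF p C])
  show "x \<in> Qp p" by (rule xq)
  show "\<exists>c\<in>C. x (int \<gamma>) = of_nat c" using c by blast
  have "x 0 = rmod (x (int \<gamma>)) (of_nat p powi 0)" by (rule Qp_chain[OF xq p]) simp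
  also have "\<dots> = rmod (of_nat c) (of_nat 1)" using c by simp
  also have "\<dots> = of_nat (c mod 1)" by (rule rmod_nat) simp
  finally show "x 0 = 0" by simp
qed

lemma rat_powi_cancel: "p > 0 \<Longrightarrow> (of_nat p powi (- int g) :: rat) * of_nat p powi (int g) = 1"
  by (simp add: power_int_minus)

lemma claimA:
  assumes p: "p > 0" and C: "C \<subseteq> {0..<p ^ \<gamma>}" and a: "a \<in> Qp p" and l: "l \<in> Qp p"
    and la: "l (- int \<gamma>) = a (- int \<gamma>)" and Ka: "a (- int Ka) = 0" and Kl: "l (- int Kl) = 0"
    and M: "\<gamma> \<le> M" "Ka \<le> M" "Kl \<le> M"
    and x: "x \<in> padic_Omega p \<gamma> C" and c: "x (int \<gamma>) = of_nat c"
  shows "padic_chi p l x = padic_chi p a x * e ((l (int M) - a (int M)) * of_nat c)"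
proof -
  have xq: "x \<in> Qp p" and x0: "x 0 = 0" using Omega_props[OF p C x] by auto
  have cl: "padic_chi p l x = e (l (int M) * x (int M))" by (rule chi_eval[OF l xq p x0 Kl M(3)])
  have ca: "padic_chi p a x = e (a (int M) * x (int M))" by (rule chi_eval[OF a xq p x0 Ka M(2)])
  have Pg: "(0::rat) < of_nat p powi (- int \<gamma>)" using p by simp
  have "rmod (l (int M)) (of_nat p powi (- int \<gamma>)) = rmod (a (int M)) (of_nat p powi (- int \<gamma>))"
    using Qp_chain[OF l p, of "- int \<gamma>" "int M"] Qp_chain[OF a p, of "- int \<gamma>" "int M"] la by simp
  then obtain j where j: "l (int M) - a (int M) = of_nat p powi (- int \<gamma>) * of_int j"
    using rmod_cong_iff[OF Pg] by blast
  obtain xi where xi: "x (int M) - x (int \<gamma>) = of_nat p powi (int \<gamma>) * of_int xi"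
    using Qp_chain_diff[OF xq p] M(1) by (metis of_nat_le_iff)
  have "(l (int M) - a (int M)) * x (int M) = (l (int M) - a (int M)) * of_nat c
      + (of_nat p powi (- int \<gamma>) * of_nat p powi (int \<gamma>)) * of_int (j * xi)"
  proof -
    have "x (int M) = of_nat c + of_nat p powi (int \<gamma>) * of_int xi" using xi c by simp
    hence "(l (int M) - a (int M)) * x (int M) = (l (int M) - a (int M)) * of_nat c
        + of_nat p powi (- int \<gamma>) * of_int j * (of_nat p powi (int \<gamma>) * of_int xi)"
      using j by (simp add: distrib_left)
    thus ?thesis by (simp add: algebra_simps)
  qed
  also have "of_nat p powi (- int \<gamma>) * of_nat p powi (int \<gamma>) = (1::rat)" by (rule rat_powi_cancel[OF p])
  finally have eq: "l (int M) * x (int M) = a (int M) * x (int M) + (l (int M) - a (int M)) * of_nat c + of_int (j * xi)"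
    by (simp add: algebra_simps)
  show ?thesis unfolding cl ca eq by (simp add: e_add e_int[of "j * xi", simplified])
qed

lemma claimB:
  fixes g :: "nat \<Rightarrow> complex"
  assumes p: "p > 0" and C: "C \<subseteq> {0..<p ^ \<gamma>}" and a: "a \<in> Qp p" and l: "l \<in> Qp p"
    and la: "l (- int \<gamma>) \<noteq> a (- int \<gamma>)" and Ka: "a (- int Ka) = 0" and Kl: "l (- int Kl) = 0"
    and M: "\<gamma> \<le> M" "Ka \<le> M" "Kl \<le> M"
  shows "integral\<^sup>L (restrict_space (haar_Zp p) (padic_Omega p \<gamma> C))
           (\<lambda>x. padic_chi p a x * g (nat \<lfloor>x (int \<gamma>)\<rfloor>) * cnj (padic_chi p l x)) = 0"
proof -
  define t where "t = a (int M) - l (int M)"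
  define h where "h q = e (t * q) * g (nat \<lfloor>rmod q (of_nat p powi int \<gamma>)\<rfloor>)" for q
  have F: "padic_chi p a x * g (nat \<lfloor>x (int \<gamma>)\<rfloor>) * cnj (padic_chi p l x) = h (x (int M))"
    if x: "x \<in> padic_Omega p \<gamma> C" for x
  proof -
    have xq: "x \<in> Qp p" and x0: "x 0 = 0" using Omega_props[OF p C x] by auto
    have cl: "padic_chi p l x = e (l (int M) * x (int M))" by (rule chi_eval[OF l xq p x0 Kl M(3)])
    have ca: "padic_chi p a x = e (a (int M) * x (int M))" by (rule chi_eval[OF a xq p x0 Ka M(2)])
    have xg: "x (int \<gamma>) = rmod (x (int M)) (of_nat p powi int \<gamma>)"
      by (rule Qp_chain[OF xq p]) (use M in simp)
    have "padic_chi p a x * cnj (padic_chi p l x) = e (t * x (int M))"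
      unfolding cl ca t_def by (simp add: e_cnj e_add[symmetric] algebra_simps)
    thus ?thesis unfolding h_def xg by (simp add: algebra_simps)
  qed
  have I: "integral\<^sup>L (restrict_space (haar_Zp p) (padic_Omega p \<gamma> C))
           (\<lambda>x. padic_chi p a x * g (nat \<lfloor>x (int \<gamma>)\<rfloor>) * cnj (padic_chi p l x))
      = (1 / real p ^ M) *\<^sub>R (\<Sum>j\<in>{j. j < p ^ M \<and> j mod p ^ \<gamma> \<in> C}. h (of_nat j))"
    by (rule INT(2)[OF p C M(1) F])
  have hj: "h (of_nat j) = e (t * of_nat j) * g (j mod p ^ \<gamma>)" for j
  proof -
    have "rmod (of_nat j) (of_nat p powi int \<gamma>) = rmod (of_nat j) (of_nat (p ^ \<gamma>))" by simp
    also have "\<dots> = of_nat (j mod p ^ \<gamma>)" by (rule rmod_nat) (use p in simp)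
    finally show ?thesis by (simp add: h_def)
  qed
  have nz: "\<nexists>z. t * of_nat p ^ \<gamma> = of_int z"
  proof
    assume "\<exists>z. t * of_nat p ^ \<gamma> = of_int z"
    then obtain z where z: "t * of_nat p ^ \<gamma> = of_int z" by blast
    have Pg: "(0::rat) < of_nat p powi (- int \<gamma>)" using p by simp
    have "a (int M) - l (int M) = of_nat p powi (- int \<gamma>) * of_int z"
      using z p unfolding t_def by (simp add: power_int_minus field_simps)
    hence "rmod (a (int M)) (of_nat p powi (- int \<gamma>)) = rmod (l (int M)) (of_nat p powi (- int \<gamma>))"
      using rmod_cong[OF Pg] by blast
    hence "a (- int \<gamma>) = l (- int \<gamma>)"
      using Qp_chain[OF l p, of "- int \<gamma>" "int M"] Qp_chain[OF a p, of "- int \<gamma>" "int M"] by simp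
    thus False using la by simp
  qed
  have den: "\<exists>w. y (int M) * of_nat p ^ M = of_int w" if y: "y \<in> Qp p" "y (- int K) = 0" "K \<le> M" for y K
  proof -
    have "y (int M) * of_nat p ^ K = of_int \<lfloor>y (int M) * of_nat p ^ K\<rfloor>"
      by (rule Qp_denom[OF y(1) p y(2)]) simp
    moreover have "(of_nat p ^ M :: rat) = of_nat p ^ K * of_nat p ^ (M - K)"
      using y(3) by (simp add: power_add[symmetric])
    ultimately have "y (int M) * of_nat p ^ M = of_int (\<lfloor>y (int M) * of_nat p ^ K\<rfloor> * int p ^ (M - K))"
      by (simp add: mult.assoc[symmetric])
    thus ?thesis by blast
  qed
  obtain wa where wa: "a (int M) * of_nat p ^ M = of_int wa" using den[OF a Ka M(2)] by blast
  obtain wl where wl: "l (int M) * of_nat p ^ M = of_int wl" using den[OF l Kl M(3)] by blast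
  have pe: "t * of_nat p ^ M = of_int (wa - wl)" using wa wl by (simp add: t_def left_diff_distrib)
  have "(\<Sum>j\<in>{j. j < p ^ M \<and> j mod p ^ \<gamma> \<in> C}. h (of_nat j))
      = (\<Sum>j\<in>{j. j < p ^ M \<and> j mod p ^ \<gamma> \<in> C}. e (t * of_nat j) * g (j mod p ^ \<gamma>))"
    by (simp add: hj)
  also have "\<dots> = 0" by (rule char_sum_zero[OF p M(1) C nz pe])
  finally show ?thesis using I by simp
qed



lemma Omega_sets_haar: assumes p: "p > 0" and C: "C \<subseteq> {0..<p ^ \<gamma>}"
  shows "padic_Omega p \<gamma> C \<inter> space (haar_Zp p) \<in> sets (haar_Zp p)"
proof -
  have sp: "space (haar_Zp p) = UNIV" by (simp add: haar_eq space_QM)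
  show ?thesis using Omega_sets[of p C \<gamma>] by (simp add: sp Omega_eq[OF p C] haar_eq)
qed

lemma setC: assumes "C \<subseteq> {0..<(N::nat)}" shows "{j. j < N \<and> j mod N \<in> C} = C"
  using assms by auto

lemma chi_unit: "padic_chi p a x * cnj (padic_chi p a x) = 1"
  by (simp add: padic_chi_def cis_cnj cis_mult)

lemma chi_norm: "norm (padic_chi p a x) = 1"
  by (simp add: padic_chi_def)

lemma measure_Omega: assumes p: "p > 0" and C: "C \<subseteq> {0..<p ^ \<gamma>}"
  shows "measure (haar_Zp p) (padic_Omega p \<gamma> C) = real (card C) / real p ^ \<gamma>"
proof -
  let ?R = "restrict_space (haar_Zp p) (padic_Omega p \<gamma> C)"
  have sp: "space (haar_Zp p) = UNIV" by (simp add: haar_eq space_QM)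
  have "integral\<^sup>L ?R (\<lambda>_. 1::real) = (1 / real p ^ \<gamma>) *\<^sub>R (\<Sum>j\<in>{j. j < p ^ \<gamma> \<and> j mod p ^ \<gamma> \<in> C}. (\<lambda>_. 1::real) (of_nat j :: rat))"
    by (rule INT(2)[OF p C order.refl]) simp
  also have "\<dots> = real (card C) / real p ^ \<gamma>" by (simp add: setC[OF C])
  finally have I: "integral\<^sup>L ?R (\<lambda>_. 1::real) = real (card C) / real p ^ \<gamma>" .
  have "integral\<^sup>L ?R (\<lambda>_. 1::real) = measure ?R (space ?R)" by simp
  also have "\<dots> = measure (haar_Zp p) (padic_Omega p \<gamma> C)"
    using Omega_sets_haar[OF p C] by (simp add: measure_restrict_space space_restrict_space sp)
  finally show ?thesis using I by simp
qed



theorem lemma2p7: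
  fixes p \<gamma> :: nat and C :: "nat set" and \<Lambda> :: "(int \<Rightarrow> rat) set"
  assumes "prime p" and "\<gamma> \<ge> 1"
    and "C \<subseteq> {0..<p ^ \<gamma>}" and "C \<noteq> {}"
    and "\<Lambda> \<subseteq> Qp p"
    and "is_spectrum p (padic_Omega p \<gamma> C) \<Lambda>"
  shows "\<forall>a \<in> Qp p. finite (padic_ball p a (int \<gamma>) \<inter> \<Lambda>)
                  \<and> card (padic_ball p a (int \<gamma>) \<inter> \<Lambda>) = card C"
proof
  fix a assume a: "a \<in> Qp p"
  have p: "p > 0" using assms(1) by (simp add: prime_gt_0_nat)
  note C = assms(3)
  define \<Omega> where "\<Omega> = padic_Omega p \<gamma> C"
  define n where "n = card C"
  have finC: "finite C" using C by (rule finite_subset) simp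
  have n0: "n > 0" using finC assms(4) by (simp add: n_def card_gt_0_iff)
  obtain c0 where c0: "c0 \<in> C" using assms(4) by blast
  have ON: "\<And>l m. l \<in> \<Lambda> \<Longrightarrow> m \<in> \<Lambda> \<Longrightarrow> padic_inner p \<Omega> (padic_chi p l) (padic_chi p m) = (if l = m then 1 else 0)"
    using assms(6) unfolding is_spectrum_def \<Omega>_def by blast
  have COMPL: "\<And>f. f \<in> borel_measurable (restrict_space (haar_Zp p) \<Omega>) \<Longrightarrow>
      integrable (restrict_space (haar_Zp p) \<Omega>) (\<lambda>x. (cmod (f x))\<^sup>2) \<Longrightarrow>
      (\<forall>l\<in>\<Lambda>. padic_inner p \<Omega> f (padic_chi p l) = 0) \<Longrightarrow>
      (AE x in restrict_space (haar_Zp p) \<Omega>. f x = 0)"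
    using assms(6) unfolding is_spectrum_def \<Omega>_def by blast
  have meas: "measure (haar_Zp p) \<Omega> = real n / real p ^ \<gamma>"
    unfolding \<Omega>_def n_def by (rule measure_Omega[OF p C])
  define K where "K l = (SOME K. l (- int K) = (0::rat))" for l :: "int \<Rightarrow> rat"
  have K: "l (- int (K l)) = 0" if "l \<in> Qp p" for l
    unfolding K_def by (rule someI_ex[OF Qp_K[OF that]])
  define Mof where "Mof l = max \<gamma> (max (K a) (K l))" for l
  define \<kappa> where "\<kappa> l c = e ((l (int (Mof l)) - a (int (Mof l))) * of_nat c)" for l c
  define \<Lambda>a where "\<Lambda>a = padic_ball p a (int \<gamma>) \<inter> \<Lambda>"
  have inball: "l \<in> \<Lambda>a \<longleftrightarrow> l \<in> \<Lambda> \<and> l (- int \<gamma>) = a (- int \<gamma>)" for l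
    using assms(5) by (auto simp: \<Lambda>a_def padic_ball_def)
  have \<Omega>c: "\<exists>c\<in>C. x (int \<gamma>) = of_nat c" if "x \<in> \<Omega>" for x
    using Omega_props(3)[OF p C] that by (simp add: \<Omega>_def)
  have chiA: "padic_chi p l x = padic_chi p a x * \<kappa> l (nat \<lfloor>x (int \<gamma>)\<rfloor>)" if l: "l \<in> \<Lambda>a" and x: "x \<in> \<Omega>" for l x
  proof -
    obtain c where c: "x (int \<gamma>) = of_nat c" using \<Omega>c[OF x] by blast
    have lq: "l \<in> Qp p" using l assms(5) by (auto simp: inball)
    have "padic_chi p l x = padic_chi p a x * e ((l (int (Mof l)) - a (int (Mof l))) * of_nat c)"
      by (rule claimA[OF p C a lq _ K[OF a] K[OF lq]]) (use l x c in \<open>auto simp: inball Mof_def \<Omega>_def\<close>)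
    thus ?thesis using c by (simp add: \<kappa>_def)
  qed
  have inner_gen: "padic_inner p \<Omega> u v = (\<Sum>c\<in>C. \<phi> c * cnj (\<psi> c)) / of_nat n"
    if u: "\<forall>x\<in>\<Omega>. u x = padic_chi p a x * \<phi> (nat \<lfloor>x (int \<gamma>)\<rfloor>)"
    and v: "\<forall>x\<in>\<Omega>. v x = padic_chi p a x * \<psi> (nat \<lfloor>x (int \<gamma>)\<rfloor>)" for u v \<phi> \<psi>
  proof -
    define h where "h q = \<phi> (nat \<lfloor>q\<rfloor>) * cnj (\<psi> (nat \<lfloor>q\<rfloor>))" for q :: rat
    have F: "u x * cnj (v x) = h (x (int \<gamma>))" if x: "x \<in> padic_Omega p \<gamma> C" for x
    proof -
      have "u x * cnj (v x) = (padic_chi p a x * cnj (padic_chi p a x)) * (\<phi> (nat \<lfloor>x (int \<gamma>)\<rfloor>) * cnj (\<psi> (nat \<lfloor>x (int \<gamma>)\<rfloor>)))"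
        using u v x by (simp add: \<Omega>_def algebra_simps)
      thus ?thesis by (simp add: chi_unit h_def)
    qed
    have "integral\<^sup>L (restrict_space (haar_Zp p) \<Omega>) (\<lambda>x. u x * cnj (v x))
        = (1 / real p ^ \<gamma>) *\<^sub>R (\<Sum>j\<in>{j. j < p ^ \<gamma> \<and> j mod p ^ \<gamma> \<in> C}. h (of_nat j))"
      unfolding \<Omega>_def by (rule INT(2)[OF p C order.refl F])
    also have "\<dots> = (1 / real p ^ \<gamma>) *\<^sub>R (\<Sum>c\<in>C. \<phi> c * cnj (\<psi> c))"
      by (simp add: setC[OF C] h_def)
    finally have I: "integral\<^sup>L (restrict_space (haar_Zp p) \<Omega>) (\<lambda>x. u x * cnj (v x)) = (1 / real p ^ \<gamma>) *\<^sub>R (\<Sum>c\<in>C. \<phi> c * cnj (\<psi> c))" .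
    show ?thesis unfolding padic_inner_def I meas using p
      by (simp add: scaleR_conv_of_real field_simps)
  qed
  have chiA': "\<forall>x\<in>\<Omega>. padic_chi p l x = padic_chi p a x * \<kappa> l (nat \<lfloor>x (int \<gamma>)\<rfloor>)" if "l \<in> \<Lambda>a" for l
    using chiA[OF that] by blast
  have orthK: "(\<Sum>c\<in>C. \<kappa> l c * cnj (\<kappa> m c)) = (if l = m then of_nat n else 0)"
    if l: "l \<in> \<Lambda>a" and m: "m \<in> \<Lambda>a" for l m
  proof -
    have "(\<Sum>c\<in>C. \<kappa> l c * cnj (\<kappa> m c)) / of_nat n = padic_inner p \<Omega> (padic_chi p l) (padic_chi p m)"
      by (rule inner_gen[OF chiA'[OF l] chiA'[OF m], symmetric])
    also have "\<dots> = (if l = m then 1 else 0)" using ON l m by (simp add: inball)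
    finally show ?thesis using n0 by (auto simp: field_simps split: if_splits)
  qed
  have unitK: "\<kappa> l c0 * cnj (\<kappa> l c0) = 1" for l by (simp add: \<kappa>_def)
  define r where "r F d = (if d = c0 then 1 else 0) - (\<Sum>l\<in>F. cnj (\<kappa> l c0) * \<kappa> l d) / of_nat (card C)" for F d
  have rnorm: "(\<Sum>d\<in>C. (cmod (r F d))\<^sup>2) = 1 - real (card F) / real n" if F: "F \<subseteq> \<Lambda>a" "finite F" for F
  proof -
    have orthF: "(\<Sum>c\<in>C. \<kappa> l c * cnj (\<kappa> m c)) = (if l = m then of_nat (card C) else 0)"
      if "l \<in> F" "m \<in> F" for l m using orthK[OF subsetD[OF F(1) that(1)] subsetD[OF F(1) that(2)]] by (simp add: n_def)
    have "(\<Sum>d\<in>C. r F d * cnj (r F d)) = 1 - of_nat (card F) / of_nat (card C)"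
      by (rule bessel_norm[OF finC c0 F(2) orthF unitK r_def[of F]])
    moreover have "(\<Sum>d\<in>C. r F d * cnj (r F d)) = complex_of_real (\<Sum>d\<in>C. (cmod (r F d))\<^sup>2)"
      by (simp only: of_real_sum complex_norm_square)
    ultimately have "complex_of_real (\<Sum>d\<in>C. (cmod (r F d))\<^sup>2) = complex_of_real (1 - real (card F) / real n)"
      by (simp add: n_def)
    thus ?thesis by (simp only: of_real_eq_iff)
  qed
  have rorth: "(\<Sum>d\<in>C. r F d * cnj (\<kappa> m d)) = 0" if F: "F \<subseteq> \<Lambda>a" "finite F" and m: "m \<in> F" for F m
  proof -
    have orthF: "(\<Sum>c\<in>C. \<kappa> l c * cnj (\<kappa> m c)) = (if l = m then of_nat (card C) else 0)"
      if "l \<in> F" "m \<in> F" for l m using orthK[OF subsetD[OF F(1) that(1)] subsetD[OF F(1) that(2)]] by (simp add: n_def)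
    show ?thesis by (rule bessel_orth[OF finC c0 F(2) orthF unitK r_def[of F] m])
  qed
  have le: "card F \<le> n" if F: "F \<subseteq> \<Lambda>a" "finite F" for F
  proof -
    have "0 \<le> (\<Sum>d\<in>C. (cmod (r F d))\<^sup>2)" by (rule sum_nonneg) simp
    hence "real (card F) / real n \<le> 1" using rnorm[OF F] by simp
    thus ?thesis using n0 by (simp add: field_simps)
  qed
  have finA: "finite \<Lambda>a"
  proof (rule ccontr)
    assume "infinite \<Lambda>a"
    then obtain F where F: "finite F" "card F = Suc n" "F \<subseteq> \<Lambda>a" using infinite_arbitrarily_large by blast
    have "card F \<le> n" by (rule le[OF F(3) F(1)])
    thus False using F(2) by simp
  qed
  have cardle: "card \<Lambda>a \<le> n" by (rule le[OF order.refl finA])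
  have cardeq: "card \<Lambda>a = n"
  proof (rule ccontr)
    assume ne: "card \<Lambda>a \<noteq> n"
    hence lt: "card \<Lambda>a < n" using cardle by simp
    define R where "R = restrict_space (haar_Zp p) \<Omega>"
    define Ma where "Ma = max \<gamma> (K a)"
    define f where "f x = e (a (int Ma) * x (int Ma)) * r \<Lambda>a (nat \<lfloor>x (int \<gamma>)\<rfloor>)" for x :: "int \<Rightarrow> rat"
    have fchi: "\<forall>x\<in>\<Omega>. f x = padic_chi p a x * r \<Lambda>a (nat \<lfloor>x (int \<gamma>)\<rfloor>)"
    proof
      fix x assume x: "x \<in> \<Omega>"
      have xq: "x \<in> Qp p" and x0: "x 0 = 0" using Omega_props[OF p C] x by (auto simp: \<Omega>_def)
      have "padic_chi p a x = e (a (int Ma) * x (int Ma))"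
        by (rule chi_eval[OF a xq p x0 K[OF a]]) (simp add: Ma_def)
      thus "f x = padic_chi p a x * r \<Lambda>a (nat \<lfloor>x (int \<gamma>)\<rfloor>)" by (simp add: f_def)
    qed
    have fQ: "f \<in> borel_measurable QM"
    proof -
      have c1: "(\<lambda>x::int\<Rightarrow>rat. e (a (int Ma) * x (int Ma))) \<in> borel_measurable QM"
        by (rule measurable_compose[OF measurable_component_singleton]) auto
      have c2: "(\<lambda>x::int\<Rightarrow>rat. r \<Lambda>a (nat \<lfloor>x (int \<gamma>)\<rfloor>)) \<in> borel_measurable QM"
        by (rule measurable_compose[OF measurable_component_singleton]) auto
      show ?thesis unfolding f_def[abs_def] by (intro borel_measurable_times c1 c2)
    qed
    have fm: "f \<in> borel_measurable R"
      unfolding R_def by (rule measurable_restrict_space1) (use fQ in \<open>simp add: haar_eq\<close>)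
    have f2m: "(\<lambda>x. (cmod (f x))\<^sup>2) \<in> borel_measurable R" using fm by measurable
    have F2: "(cmod (f x))\<^sup>2 = (\<lambda>q. (cmod (r \<Lambda>a (nat \<lfloor>q\<rfloor>)))\<^sup>2) (x (int \<gamma>))" if "x \<in> padic_Omega p \<gamma> C" for x
      using fchi that by (simp add: \<Omega>_def norm_mult chi_norm)
    have fint: "integrable R (\<lambda>x. (cmod (f x))\<^sup>2)"
      unfolding R_def \<Omega>_def by (rule INT(1)[OF p C order.refl F2])
    have "integral\<^sup>L R (\<lambda>x. (cmod (f x))\<^sup>2) = (1 / real p ^ \<gamma>) *\<^sub>R (\<Sum>j\<in>{j. j < p ^ \<gamma> \<and> j mod p ^ \<gamma> \<in> C}. (\<lambda>q. (cmod (r \<Lambda>a (nat \<lfloor>q\<rfloor>)))\<^sup>2) (of_nat j :: rat))"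
      unfolding R_def \<Omega>_def by (rule INT(2)[OF p C order.refl F2])
    also have "\<dots> = (1 / real p ^ \<gamma>) * (\<Sum>d\<in>C. (cmod (r \<Lambda>a d))\<^sup>2)" by (simp add: setC[OF C])
    also have "\<dots> = (1 / real p ^ \<gamma>) * (1 - real (card \<Lambda>a) / real n)" by (simp add: rnorm[OF order.refl finA])
    finally have ival: "integral\<^sup>L R (\<lambda>x. (cmod (f x))\<^sup>2) = (1 / real p ^ \<gamma>) * (1 - real (card \<Lambda>a) / real n)" .
    have pos: "(1 / real p ^ \<gamma>) * (1 - real (card \<Lambda>a) / real n) > 0"
      using lt n0 p by (simp add: field_simps)
    have forth: "\<forall>l\<in>\<Lambda>. padic_inner p \<Omega> f (padic_chi p l) = 0"
    proof
      fix l assume l: "l \<in> \<Lambda>"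
      show "padic_inner p \<Omega> f (padic_chi p l) = 0"
      proof (cases "l \<in> \<Lambda>a")
        case True
        have "padic_inner p \<Omega> f (padic_chi p l) = (\<Sum>c\<in>C. r \<Lambda>a c * cnj (\<kappa> l c)) / of_nat n"
          by (rule inner_gen[OF fchi chiA'[OF True]])
        also have "(\<Sum>c\<in>C. r \<Lambda>a c * cnj (\<kappa> l c)) = 0" by (rule rorth[OF order.refl finA True])
        finally show ?thesis by simp
      next
        case False
        have lq: "l \<in> Qp p" using l assms(5) by auto
        have la: "l (- int \<gamma>) \<noteq> a (- int \<gamma>)" using False l by (simp add: inball)
        have "integral\<^sup>L R (\<lambda>x. f x * cnj (padic_chi p l x))
            = integral\<^sup>L R (\<lambda>x. padic_chi p a x * r \<Lambda>a (nat \<lfloor>x (int \<gamma>)\<rfloor>) * cnj (padic_chi p l x))"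
          by (rule Bochner_Integration.integral_cong[OF refl]) (use fchi in \<open>simp add: R_def space_restrict_space\<close>)
        also have "\<dots> = 0" unfolding R_def \<Omega>_def
          by (rule claimB[OF p C a lq la K[OF a] K[OF lq], where M = "Mof l"]) (auto simp: Mof_def)
        finally show ?thesis by (simp add: padic_inner_def R_def)
      qed
    qed
    have AE: "AE x in R. f x = 0" unfolding R_def by (rule COMPL[OF fm[unfolded R_def] fint[unfolded R_def] forth])
    have "integral\<^sup>L R (\<lambda>x. (cmod (f x))\<^sup>2) = integral\<^sup>L R (\<lambda>x. 0::real)"
    proof (rule integral_cong_AE[OF f2m])
      show "(\<lambda>x. 0::real) \<in> borel_measurable R" by simp
      show "AE x in R. (cmod (f x))\<^sup>2 = 0" using AE by eventually_elim simp
    qed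
    hence "integral\<^sup>L R (\<lambda>x. (cmod (f x))\<^sup>2) = 0" by simp
    thus False using ival pos by linarith
  qed
  show "finite (padic_ball p a (int \<gamma>) \<inter> \<Lambda>) \<and> card (padic_ball p a (int \<gamma>) \<inter> \<Lambda>) = card C"
    using finA cardeq by (simp add: \<Lambda>a_def n_def)
qed


end
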